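(* Let $(A,C,k)$ be an instance and let $W$ be an affordable committee satisfying EJR+. Then every AV-completion of $W$ has utilitarian ratio at least $\frac{1}{4\sqrt{k}}-\frac{1}{2k}$.
   Context: An instance $(A,C,k)$ consists of a finite nonempty candidate set $C$, voters $N=\{1,\dots,n\}$, approval sets $A_i\subseteq C$, and a committee size $1\le k\le |C|$. $N_c=\{i: c\in A_i\}$. A committee is $W\subseteq C$ with $|W|\le k$. $\mathrm{sw}(W)=\sum_i|A_i\cap W|$; the utilitarian ratio is $\mathrm{sw}(W)/\max\{\mathrm{sw}(W'):|W'|=k\}$. An AV-completion of $W$ is $W\cup T$ with $T\subseteq C\setminus W$, $|T|=k-|W|$, maximizing $\sum_{c\in T}|N_c|$. $W$ is affordable if there are $p_i:C\to\mathbb{R}_{\ge0}$ with $p_i(c)=0$ for $c\notin A_i$, $\sum_c p_i(c)\le k/n$, $\sum_i p_i(c)=1$ for $c\in W$, $\sum_i p_i(c)=0$ for $c\notin W$. $W$ satisfies EJR+ if for every $\ell\in\{1,\dots,k\}$ and every group $N'\subseteq N$ with $|N'|\ge \ell n/k$ and $\bigcap_{i\in N'}A_i\neq\emptyset$, either some $i\in N'$ has $|A_i\cap W|\ge\ell$ or $\bigcap_{i\in N'}A_i\subseteq W$. *)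

theory Defs
  imports "HOL-Analysis.Analysis"
begin

definition voters :: "nat \<Rightarrow> nat set" where
  "voters n = {1..n}"

definition supporters :: "nat \<Rightarrow> (nat \<Rightarrow> 'c set) \<Rightarrow> 'c \<Rightarrow> nat set" where
  "supporters n A c = {i \<in> voters n. c \<in> A i}"

definition is_instance :: "'c set \<Rightarrow> nat \<Rightarrow> (nat \<Rightarrow> 'c set) \<Rightarrow> nat \<Rightarrow> bool" where
  "is_instance C n A k \<longleftrightarrow> finite C \<and> C \<noteq> {} \<and> n \<ge> 1
      \<and> (\<forall>i \<in> voters n. A i \<subseteq> C) \<and> 1 \<le> k \<and> k \<le> card C"

definition committee :: "'c set \<Rightarrow> nat \<Rightarrow> 'c set \<Rightarrow> bool" where
  "committee C k W \<longleftrightarrow> W \<subseteq> C \<and> card W \<le> k"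

definition sw :: "nat \<Rightarrow> (nat \<Rightarrow> 'c set) \<Rightarrow> 'c set \<Rightarrow> nat" where
  "sw n A W = (\<Sum>i \<in> voters n. card (A i \<inter> W))"

definition opt_sw :: "'c set \<Rightarrow> nat \<Rightarrow> (nat \<Rightarrow> 'c set) \<Rightarrow> nat \<Rightarrow> nat" where
  "opt_sw C n A k = Max {sw n A W' | W'. W' \<subseteq> C \<and> card W' = k}"

definition util_ratio :: "'c set \<Rightarrow> nat \<Rightarrow> (nat \<Rightarrow> 'c set) \<Rightarrow> nat \<Rightarrow> 'c set \<Rightarrow> real" where
  "util_ratio C n A k W = real (sw n A W) / real (opt_sw C n A k)"

definition AV_completion :: "'c set \<Rightarrow> nat \<Rightarrow> (nat \<Rightarrow> 'c set) \<Rightarrow> nat \<Rightarrow> 'c set \<Rightarrow> 'c set \<Rightarrow> bool" where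
  "AV_completion C n A k W W2 \<longleftrightarrow> (\<exists>T. T \<subseteq> C - W \<and> card T = k - card W \<and> W2 = W \<union> T
      \<and> (\<forall>T'. T' \<subseteq> C - W \<and> card T' = k - card W \<longrightarrow>
            (\<Sum>c\<in>T'. card (supporters n A c)) \<le> (\<Sum>c\<in>T. card (supporters n A c))))"

definition affordable :: "'c set \<Rightarrow> nat \<Rightarrow> (nat \<Rightarrow> 'c set) \<Rightarrow> nat \<Rightarrow> 'c set \<Rightarrow> bool" where
  "affordable C n A k W \<longleftrightarrow> (\<exists>p :: nat \<Rightarrow> 'c \<Rightarrow> real.
      (\<forall>i \<in> voters n. \<forall>c \<in> C. p i c \<ge> 0)
    \<and> (\<forall>i \<in> voters n. \<forall>c \<in> C. c \<notin> A i \<longrightarrow> p i c = 0)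
    \<and> (\<forall>i \<in> voters n. (\<Sum>c\<in>C. p i c) \<le> real k / real n)
    \<and> (\<forall>c \<in> W. (\<Sum>i\<in>voters n. p i c) = 1)
    \<and> (\<forall>c \<in> C - W. (\<Sum>i\<in>voters n. p i c) = 0))"

definition EJR_plus :: "'c set \<Rightarrow> nat \<Rightarrow> (nat \<Rightarrow> 'c set) \<Rightarrow> nat \<Rightarrow> 'c set \<Rightarrow> bool" where
  "EJR_plus C n A k W \<longleftrightarrow> (\<forall>l \<in> {1..k}. \<forall>N' \<subseteq> voters n.
      real (card N') \<ge> real l * real n / real k \<and> (\<Inter>i\<in>N'. A i) \<noteq> {} \<and> N' \<noteq> {} \<longrightarrow>
      (\<exists>i \<in> N'. card (A i \<inter> W) \<ge> l) \<or> (\<Inter>i\<in>N'. A i) \<subseteq> W)"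

end

theory Submission imports Defs begin
lemma card_as_sum: "finite X \<Longrightarrow> card (X \<inter> Y) = (\<Sum>x\<in>X. if x \<in> Y then 1 else 0)"
  by (simp add: sum.inter_restrict[symmetric])

lemma sw_sum:
  assumes "finite W"
  shows "sw n A W = (\<Sum>c\<in>W. card (supporters n A c))"
proof -
  have fV: "finite (voters n)" by (simp add: voters_def)
  have "sw n A W = (\<Sum>i\<in>voters n. \<Sum>c\<in>W. if c \<in> A i then 1 else 0)"
    unfolding sw_def proof (rule sum.cong)
    fix i show "card (A i \<inter> W) = (\<Sum>c\<in>W. if c \<in> A i then 1 else 0)"
      using card_as_sum[OF assms, of "A i"] by (simp add: Int_commute)
  qed simp
  also have "\<dots> = (\<Sum>c\<in>W. \<Sum>i\<in>voters n. if c \<in> A i then 1 else 0)"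
    by (rule sum.swap)
  also have "\<dots> = (\<Sum>c\<in>W. card (supporters n A c))"
  proof (rule sum.cong)
    fix c assume "c \<in> W"
    have "supporters n A c = voters n \<inter> {i. c \<in> A i}" by (auto simp: supporters_def)
    then show "(\<Sum>i\<in>voters n. if c \<in> A i then 1 else 0) = card (supporters n A c)"
      using card_as_sum[OF fV, of "{i. c \<in> A i}"] by simp
  qed simp
  finally show ?thesis .
qed

lemma afford_bound:
  assumes "is_instance C n A k" "committee C k W" "affordable C n A k W" "c \<in> W"
  shows "real n \<le> real k * real (card (supporters n A c))"
proof -
  obtain p :: "nat \<Rightarrow> 'a \<Rightarrow> real" where
    p1: "\<forall>i \<in> voters n. \<forall>c \<in> C. p i c \<ge> 0" and
    p2: "\<forall>i \<in> voters n. \<forall>c \<in> C. c \<notin> A i \<longrightarrow> p i c = 0" and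
    p3: "\<forall>i \<in> voters n. (\<Sum>c\<in>C. p i c) \<le> real k / real n" and
    p4: "\<forall>c \<in> W. (\<Sum>i\<in>voters n. p i c) = 1"
    using assms(3) unfolding affordable_def by blast
  have cC: "c \<in> C" using assms(2,4) by (auto simp: committee_def)
  have fC: "finite C" using assms(1) by (simp add: is_instance_def)
  have n1: "n \<ge> 1" using assms(1) by (simp add: is_instance_def)
  have fV: "finite (voters n)" by (simp add: voters_def)
  have le: "p i c \<le> real k / real n" if "i \<in> voters n" for i
  proof -
    have "p i c \<le> (\<Sum>c\<in>C. p i c)"
      using member_le_sum[of c C "p i"] p1 that cC fC by auto
    then show ?thesis using p3 that by auto
  qed
  have "1 = (\<Sum>i\<in>voters n. p i c)" using p4 assms(4) by auto
  also have "\<dots> = (\<Sum>i\<in>supporters n A c. p i c)"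
    by (rule sum.mono_neutral_right) (use fV p2 cC in \<open>auto simp: supporters_def\<close>)
  also have "\<dots> \<le> (\<Sum>i\<in>supporters n A c. real k / real n)"
    by (rule sum_mono) (use le in \<open>auto simp: supporters_def\<close>)
  also have "\<dots> = real (card (supporters n A c)) * real k / real n" by simp
  finally have "1 \<le> real (card (supporters n A c)) * real k / real n" .
  then show ?thesis using n1 by (simp add: field_simps)
qed

lemma ne_of_mem: "x \<in> X \<Longrightarrow> X \<noteq> {}" by auto

lemma ejr_level:
  assumes "EJR_plus C n A k W" "c \<notin> W" "l \<in> {1..k}" "k \<ge> 1" "n \<ge> 1"
  shows "real (card {i \<in> voters n. c \<in> A i \<and> card (A i \<inter> W) < l}) * real k < real l * real n"
proof (rule ccontr)
  let ?N = "{i \<in> voters n. c \<in> A i \<and> card (A i \<inter> W) < l}"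
  assume "\<not> ?thesis"
  then have ge: "real (card ?N) \<ge> real l * real n / real k" using assms(4)
    by (simp add: field_simps)
  have "real l * real n / real k > 0" using assms by auto
  then have ne: "?N \<noteq> {}"
  proof -
    have "real (card ?N) > 0" using ge \<open>real l * real n / real k > 0\<close> by linarith
    then have "card ?N > 0" by simp
    then show ?thesis by (metis card.empty less_irrefl)
  qed
  have cin: "c \<in> (\<Inter>i\<in>?N. A i)" by auto
  have "(\<exists>i \<in> ?N. card (A i \<inter> W) \<ge> l) \<or> (\<Inter>i\<in>?N. A i) \<subseteq> W"
  proof -
    have H: "\<forall>l \<in> {1..k}. \<forall>N' \<subseteq> voters n.
      real (card N') \<ge> real l * real n / real k \<and> (\<Inter>i\<in>N'. A i) \<noteq> {} \<and> N' \<noteq> {} \<longrightarrow>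
      (\<exists>i \<in> N'. card (A i \<inter> W) \<ge> l) \<or> (\<Inter>i\<in>N'. A i) \<subseteq> W"
      using assms(1) unfolding EJR_plus_def .
    have sub: "?N \<subseteq> voters n" by auto
    have ne2: "(\<Inter>i\<in>?N. A i) \<noteq> {}" using cin by (rule ne_of_mem)
    show ?thesis by (rule H[rule_format, OF assms(3) sub, OF conjI[OF ge conjI[OF ne2 ne]]])
  qed
  then show False using cin assms(2) by auto
qed

lemma arith_core:
  fixes S a n k :: nat
  assumes k1: "k \<ge> 1" and n1: "n \<ge> 1" and an: "a \<le> n" and nS: "real n \<le> 2 * real S"
    and lev: "\<And>l. l \<in> {1..k} \<Longrightarrow> real k * real S \<ge> real l * (real k * real a - real l * real n)"
  shows "real k * real a \<le> 4 * sqrt (real k) * real S"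
proof (cases "real k * real a \<le> 2 * sqrt (real k) * real n")
  case True
  have "2 * sqrt (real k) * real n \<le> 2 * sqrt (real k) * (2 * real S)"
    using nS by (intro mult_left_mono) auto
  then show ?thesis using True by linarith
next
  case False
  define r where "r = sqrt (real k)"
  have r1: "r \<ge> 1" using k1 by (simp add: r_def)
  have kr: "real k = r * r" using r_def by simp
  define y where "y = real k * real a / real n"
  have npos: "real n > 0" using n1 by simp
  have ka: "real k * real a = y * real n" using npos by (simp add: y_def)
  have "(2 * r) * real n < y * real n" using False ka unfolding r_def by linarith
  then have y2r: "y > 2 * r" using mult_less_cancel_right_pos[OF npos] by blast
  have yk: "y \<le> real k"
  proof -
    have "real k * real a \<le> real k * real n" using an by (intro mult_left_mono) auto
    then show ?thesis using npos by (simp add: y_def divide_le_eq)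
  qed
  define l where "l = nat \<lfloor>y / 2\<rfloor>"
  have y0: "y \<ge> 0" using y2r r1 by linarith
  have fl0: "\<lfloor>y / 2\<rfloor> \<ge> 0" using y0 by simp
  have rl: "real l = real_of_int \<lfloor>y / 2\<rfloor>" using fl0 by (simp add: l_def)
  have lle: "real l \<le> y / 2" unfolding rl by (rule of_int_floor_le)
  have lgt: "real l > y / 2 - 1" unfolding rl by linarith
  have l1: "l \<ge> 1" using lgt y2r r1 by linarith
  have lk: "l \<le> k" using lle yk y0 by linarith
  have "real k * real S \<ge> real l * (real k * real a - real l * real n)"
    using lev l1 lk by auto
  also have "real l * (real k * real a - real l * real n) = real n * (real l * (y - real l))"
    using ka by (simp add: algebra_simps)
  finally have kS: "real k * real S \<ge> real n * (real l * (y - real l))" .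
  define d where "d = y / 2 - real l"
  have d0: "d \<ge> 0" "d < 1" using lle lgt by (auto simp: d_def)
  have "d \<le> 1" using d0 by linarith
  then have dd: "d * d \<le> 1" using mult_le_one[of d d] d0 by blast
  have "real l * (y - real l) = y * y / 4 - d * d" by (simp add: d_def algebra_simps)
  then have ly: "real l * (y - real l) \<ge> y * y / 4 - 1" using dd by linarith
  have kS2: "real k * real S \<ge> real n * (y * y / 4 - 1)"
    using kS mult_left_mono[OF ly, of "real n"] npos by linarith
  have "y - r > r" using y2r by linarith
  then have "y * (y - r) \<ge> 2 * r * r" using y2r r1
    using mult_mono[of "2 * r" y r "y - r"] by linarith
  moreover have "r * r \<ge> 2"
  proof -
    have "real k > 2" using y2r r1 yk by linarith
    then show ?thesis using kr by simp
  qed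
  ultimately have key: "r * y \<le> y * y - 4" by (simp add: algebra_simps)
  have "real k * (real k * real a) = r * r * y * real n" using ka kr by simp
  also have "\<dots> \<le> r * real n * (y * y - 4)"
  proof -
    have "r * (r * y) \<le> r * (y * y - 4)" using key r1 by (intro mult_left_mono) auto
    then have "r * (r * y) * real n \<le> r * (y * y - 4) * real n" using npos
      by (intro mult_right_mono) auto
    then show ?thesis by (simp add: algebra_simps)
  qed
  also have "\<dots> = 4 * r * (real n * (y * y / 4 - 1))" by (simp add: algebra_simps)
  also have "\<dots> \<le> 4 * r * (real k * real S)" using kS2 r1 by (intro mult_left_mono) auto
  finally have "real k * (real k * real a) \<le> real k * (4 * r * real S)" by (simp add: algebra_simps)
  then show ?thesis using k1 unfolding r_def by simp
qed

lemma caseT: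
  fixes R ST S t k s :: nat
  assumes tR: "t * R \<le> k * ST" and True: "2 * s \<le> k" and td: "t = k - s" and k1: "k \<ge> 1"
  shows "real R \<le> 4 * sqrt (real k) * (real S + real ST)"
proof -
    have t2: "k \<le> 2 * t" and t0: "t > 0" using k1 True td by auto
    have "real t * real R \<le> real k * real ST" using tR by (simp only: of_nat_mult[symmetric] of_nat_le_iff)
    also have "\<dots> \<le> real (2 * t) * real ST" using t2 by (intro mult_right_mono) auto
    also have "\<dots> = real t * (2 * real ST)" by simp
    finally have "real R \<le> 2 * real ST" using t0 by (simp only: mult_le_cancel_left_pos of_nat_0_less_iff)
    have "sqrt (real k) \<ge> 1" using k1 by simp
    then have "2 \<le> 4 * sqrt (real k)" by linarith
    have "real R \<le> 4 * sqrt (real k) * real ST"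
      using \<open>real R \<le> 2 * real ST\<close> mult_right_mono[OF \<open>2 \<le> 4 * sqrt (real k)\<close>, of "real ST"] by linarith
    moreover have "4 * sqrt (real k) * real ST \<le> 4 * sqrt (real k) * (real S + real ST)"
      by (intro mult_left_mono) auto
    ultimately show ?thesis by linarith
qed

theorem corollary2:
  fixes C :: "'c set" and n k :: nat and A :: "nat \<Rightarrow> 'c set" and W W2 :: "'c set"
  assumes "is_instance C n A k"
    and "committee C k W"
    and "affordable C n A k W"
    and "EJR_plus C n A k W"
    and "AV_completion C n A k W W2"
    and "opt_sw C n A k > 0"
  shows "util_ratio C n A k W2 \<ge> 1 / (4 * sqrt (real k)) - 1 / (2 * real k)"
proof -
  let ?sc = "\<lambda>c. card (supporters n A c)"
  have fC: "finite C" and n1: "n \<ge> 1" and k1: "k \<ge> 1" and kC: "k \<le> card C"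
    using assms(1) by (auto simp: is_instance_def)
  have fV: "finite (voters n)" and cV: "card (voters n) = n" by (auto simp: voters_def)
  have WC: "W \<subseteq> C" and sk: "card W \<le> k" using assms(2) by (auto simp: committee_def)
  have fW: "finite W" using WC fC finite_subset by auto
  define s where "s = card W"
  define t where "t = k - s"
  obtain T where TC: "T \<subseteq> C - W" and cT: "card T = k - card W" and W2: "W2 = W \<union> T"
    and Topt0: "\<forall>T'. T' \<subseteq> C - W \<and> card T' = k - card W \<longrightarrow> sum ?sc T' \<le> sum ?sc T"
    using assms(5) unfolding AV_completion_def by (elim exE conjE) (rule that)
  have cT: "card T = t" using cT unfolding t_def s_def .
  have Topt: "sum ?sc T' \<le> sum ?sc T" if "T' \<subseteq> C - W" "card T' = t" for T'
    using Topt0 that unfolding t_def s_def by blast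
  have fT: "finite T" using TC fC finite_subset by auto
  have scn: "?sc c \<le> n" for c
    using card_mono[OF fV, of "supporters n A c"] cV by (auto simp: supporters_def)
  define SS where "SS = {sw n A W' | W'. W' \<subseteq> C \<and> card W' = k}"
  have "SS \<subseteq> sw n A ` Pow C" by (auto simp: SS_def)
  moreover have "finite (sw n A ` Pow C)" using fC by simp
  ultimately have fSS: "finite SS" by (rule finite_subset)
  obtain O0 where "O0 \<subseteq> C" "card O0 = k" using obtain_subset_with_card_n[OF kC] by metis
  then have "SS \<noteq> {}" by (auto simp: SS_def)
  then have "Max SS \<in> SS" using fSS by (rule Max_in[rotated])
  then obtain Ob where OC: "Ob \<subseteq> C" and cO: "card Ob = k" and opt: "opt_sw C n A k = sw n A Ob"
    unfolding SS_def opt_sw_def[symmetric] by auto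
  have fO: "finite Ob" using OC fC finite_subset by auto
  define S where "S = sw n A W"
  define ST where "ST = sum ?sc T"
  define R where "R = sum ?sc (Ob - W - T)"
  have swW2: "sw n A W2 = S + ST"
  proof -
    have "W \<inter> T = {}" using TC by auto
    then have "sum ?sc (W \<union> T) = sum ?sc W + sum ?sc T"
      using fW fT by (rule sum.union_disjoint[rotated 2])
    then show ?thesis unfolding W2 S_def ST_def using fW fT by (simp add: sw_sum)
  qed
  have optle: "sw n A Ob \<le> S + ST + R"
  proof -
    have "sw n A Ob = sum ?sc (Ob \<inter> W) + sum ?sc (Ob - W)"
      using fO by (simp add: sw_sum sum.Int_Diff)
    moreover have "sum ?sc (Ob \<inter> W) \<le> S"
      unfolding S_def using fW by (simp add: sw_sum sum_mono2)
    moreover have "sum ?sc (Ob - W) = sum ?sc ((Ob - W) \<inter> T) + R"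
      unfolding R_def using fO by (simp add: sum.Int_Diff)
    moreover have "sum ?sc ((Ob - W) \<inter> T) \<le> ST"
      unfolding ST_def using fT by (simp add: sum_mono2)
    ultimately show ?thesis by linarith
  qed
  have swap: "?sc c \<le> ?sc d" if c: "c \<in> C - W - T" and d: "d \<in> T" for c d
  proof -
    let ?T' = "insert c (T - {d})"
    have "?T' \<subseteq> C - W" using c d TC by auto
    moreover have "card ?T' = t"
    proof -
      have "t \<ge> 1" using d fT cT card_0_eq[OF fT] by (cases t) auto
      then show ?thesis using c d fT cT by (simp add: card_insert_if)
    qed
    ultimately have "sum ?sc ?T' \<le> sum ?sc T" by (rule Topt)
    moreover have "sum ?sc ?T' = ?sc c + sum ?sc (T - {d})" using c fT by simp
    moreover have "sum ?sc T = ?sc d + sum ?sc (T - {d})" using d fT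
      by (simp add: sum.remove)
    ultimately show ?thesis by linarith
  qed
  have tR: "t * R \<le> k * ST"
  proof -
    have each: "t * ?sc c \<le> ST" if "c \<in> Ob - W - T" for c
    proof -
      have "t * ?sc c = (\<Sum>d\<in>T. ?sc c)" using cT by simp
      also have "\<dots> \<le> ST" unfolding ST_def
        by (rule sum_mono) (use swap that OC in auto)
      finally show ?thesis .
    qed
    have "t * R = (\<Sum>c\<in>Ob - W - T. t * ?sc c)" unfolding R_def by (simp add: sum_distrib_left)
    also have "\<dots> \<le> (\<Sum>c\<in>Ob - W - T. ST)" by (rule sum_mono) (use each in auto)
    also have "\<dots> = card (Ob - W - T) * ST" by simp
    also have "\<dots> \<le> k * ST"
    proof -
      have "card (Ob - W - T) \<le> k" using card_mono[OF fO, of "Ob - W - T"] cO by auto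
      then show ?thesis by (simp add: mult_right_mono)
    qed
    finally show ?thesis .
  qed
  have main: "real R \<le> 4 * sqrt (real k) * (real S + real ST)"
  proof (cases "2 * s \<le> k")
    case True
    show ?thesis by (rule caseT[OF tR True t_def k1])
  next
    case False
    have skS: "real s * real n \<le> real k * real S"
    proof -
      have "real s * real n = (\<Sum>c\<in>W. real n)" by (simp add: s_def)
      also have "\<dots> \<le> (\<Sum>c\<in>W. real k * real (?sc c))"
        by (rule sum_mono) (use afford_bound[OF assms(1,2,3)] in auto)
      also have "\<dots> = real k * real S" unfolding S_def using fW
        by (simp add: sw_sum sum_distrib_left)
      finally show ?thesis .
    qed
    have nS: "real n \<le> 2 * real S"
    proof -
      have "real k * real n \<le> real (2 * s) * real n" using False by (simp add: mult_right_mono)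
      also have "\<dots> \<le> real k * (2 * real S)" using skS by simp
      finally show ?thesis using k1 by simp
    qed
    have elem: "real k * real (?sc c) \<le> 4 * sqrt (real k) * real S" if c: "c \<in> C - W" for c
    proof (rule arith_core[OF k1 n1 scn nS])
      fix l assume l: "l \<in> {1..k}"
      let ?Q = "{i \<in> voters n. c \<in> A i \<and> card (A i \<inter> W) < l}"
      let ?G = "{i \<in> voters n. c \<in> A i \<and> card (A i \<inter> W) \<ge> l}"
      have q: "real (card ?Q) * real k < real l * real n"
        using ejr_level[OF assms(4) _ l k1 n1] c by auto
      have "supporters n A c = ?Q \<union> ?G" by (auto simp: supporters_def)
      moreover have "?Q \<inter> ?G = {}" by auto
      ultimately have a: "?sc c = card ?Q + card ?G" using fV
        by (simp add: card_Un_disjoint)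
      have "l * card ?G = (\<Sum>i\<in>?G. l)" by simp
      also have "\<dots> \<le> (\<Sum>i\<in>?G. card (A i \<inter> W))" by (rule sum_mono) auto
      also have "\<dots> \<le> (\<Sum>i\<in>voters n. card (A i \<inter> W))" by (rule sum_mono2) (use fV in auto)
      also have "\<dots> = S" by (simp add: S_def sw_def)
      finally have G: "real l * real (card ?G) \<le> real S" by (simp only: of_nat_mult[symmetric] of_nat_le_iff)
      have "real l * (real k * real (?sc c) - real l * real n)
          \<le> real l * (real k * real (?sc c) - real (card ?Q) * real k)"
        using q by (intro mult_left_mono) auto
      also have "\<dots> = real k * (real l * real (card ?G))" using a by (simp add: algebra_simps)
      also have "\<dots> \<le> real k * real S" using G by (intro mult_left_mono) auto
      finally show "real l * (real k * real (?sc c) - real l * real n) \<le> real k * real S" .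
    qed
    have "real k * real R = (\<Sum>c\<in>Ob - W - T. real k * real (?sc c))"
      unfolding R_def of_nat_sum by (rule sum_distrib_left)
    also have "\<dots> \<le> (\<Sum>c\<in>Ob - W - T. 4 * sqrt (real k) * real S)"
    proof (rule sum_mono)
      fix c assume "c \<in> Ob - W - T"
      then have "c \<in> C - W" using OC by blast
      then show "real k * real (?sc c) \<le> 4 * sqrt (real k) * real S" by (rule elem)
    qed
    also have "\<dots> = real (card (Ob - W - T)) * (4 * sqrt (real k) * real S)" by (rule sum_constant)
    also have "\<dots> \<le> real k * (4 * sqrt (real k) * real S)"
    proof -
      have "card (Ob - W - T) \<le> k" using card_mono[OF fO, of "Ob - W - T"] cO by auto
      then have "real (card (Ob - W - T)) \<le> real k" by (rule of_nat_mono)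
      moreover have "0 \<le> 4 * sqrt (real k) * real S" by simp
      ultimately show ?thesis by (rule mult_right_mono)
    qed
    finally have "real k * real R \<le> real k * (4 * sqrt (real k) * real S)" .
    then have "real R \<le> 4 * sqrt (real k) * real S"
      using mult_le_cancel_left_pos[of "real k" "real R"] k1 by simp
    moreover have "4 * sqrt (real k) * real S \<le> 4 * sqrt (real k) * (real S + real ST)"
      by (intro mult_left_mono) auto
    ultimately show ?thesis by linarith
  qed
  define r where "r = sqrt (real k)"
  have r1: "r \<ge> 1" using k1 by (simp add: r_def)
  have kr: "real k = r * r" using r_def by simp
  have optpos: "real (opt_sw C n A k) > 0" using assms(6) by simp
  have "real (opt_sw C n A k) \<le> real S + real ST + real R" using opt optle by simp
  also have "\<dots> \<le> (1 + 4 * r) * real (sw n A W2)" using main swW2 unfolding r_def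
    by (simp add: algebra_simps)
  finally have le1: "real (opt_sw C n A k) \<le> (1 + 4 * r) * real (sw n A W2)" .
  have p1: "1 + 4 * r > 0" using r1 by linarith
  have "real (opt_sw C n A k) / (1 + 4 * r) \<le> real (sw n A W2)"
    using le1 p1 by (simp add: pos_divide_le_eq mult.commute)
  then have "1 / (1 + 4 * r) * real (opt_sw C n A k) \<le> real (sw n A W2)" by simp
  then have "1 / (1 + 4 * r) \<le> util_ratio C n A k W2"
    unfolding util_ratio_def using optpos by (simp add: pos_le_divide_eq)
  moreover have "1 / (4 * r) - 1 / (2 * real k) \<le> 1 / (1 + 4 * r)"
  proof -
    have p2: "4 * r > 0" using r1 by linarith
    have e1: "1 / (4 * r) - 1 / (1 + 4 * r) = 1 / (4 * r * (1 + 4 * r))"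
      using p1 p2 by (simp add: divide_simps)
    have "2 * real k \<le> 4 * r * (1 + 4 * r)"
    proof -
      have "2 * real k = 2 * (r * r)" using kr by simp
      also have "\<dots> \<le> 16 * (r * r)" using r1 by simp
      also have "\<dots> \<le> 4 * r * (1 + 4 * r)" using r1 by (simp add: algebra_simps)
      finally show ?thesis .
    qed
    moreover have "0 < 2 * real k" using k1 by simp
    ultimately have "1 / (4 * r * (1 + 4 * r)) \<le> 1 / (2 * real k)"
      by (intro frac_le) auto
    then show ?thesis using e1 by linarith
  qed
  ultimately show ?thesis unfolding r_def by linarith
qed

end
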